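(* Let $p\in S^n$ and $T_p=\{p\}\times(S^n\setminus\{p\})\subset\tilde S^n$. There exists a homotopy equivalence $\phi\colon\tilde S^n\to S^n$, equivariant with respect to $\tau$ on $\tilde S^n$ and the antipodal involution on $S^n$, which is transversal to a $0$-sphere $S^0\subset S^n$ (a pair of antipodal points) and satisfies $\phi^{-1}(S^0)=T_p\cup\tau T_p$.
   Context: $\tilde S^n=S^n\times S^n\setminus\Delta_{S^n}$ is the deleted product, and $\tau(x,y)=(y,x)$ is the factor exchanging involution on it. *)

theory Defs
  imports "HOL-Analysis.Analysis"
begin

abbreviation unit_sphere :: "'a::euclidean_space set" where
  "unit_sphere \<equiv> sphere 0 1"

definition deleted_sphere :: "('a::euclidean_space \<times> 'a) set" where
  "deleted_sphere = (unit_sphere \<times> unit_sphere) - {(x, x) | x. True}"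

definition tau :: "'a \<times> 'a \<Rightarrow> 'a \<times> 'a" where
  "tau z = (snd z, fst z)"

definition T_set :: "'a::euclidean_space \<Rightarrow> ('a \<times> 'a) set" where
  "T_set p = {p} \<times> (unit_sphere - {p})"

definition homotopy_equivalence_map :: "'a::topological_space set \<Rightarrow> 'b::topological_space set \<Rightarrow> ('a \<Rightarrow> 'b) \<Rightarrow> bool" where
  "homotopy_equivalence_map S T f \<longleftrightarrow>
     continuous_map (top_of_set S) (top_of_set T) f \<and>
     (\<exists>g. continuous_map (top_of_set T) (top_of_set S) g \<and>
          homotopic_with_canon (\<lambda>_. True) S S (g \<circ> f) id \<and>
          homotopic_with_canon (\<lambda>_. True) T T (f \<circ> g) id)"

definition sphere_tangent :: "'a::euclidean_space \<Rightarrow> 'a set" where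
  "sphere_tangent x = {v. v \<bullet> x = 0}"

definition prod_sphere_tangent :: "'a::euclidean_space \<times> 'a \<Rightarrow> ('a \<times> 'a) set" where
  "prod_sphere_tangent z = sphere_tangent (fst z) \<times> sphere_tangent (snd z)"

text \<open>A map phi from the deleted product (a submanifold of R^{n+1} x R^{n+1}) to S^n is
  transversal to the point q of S^n: at every z in phi^{-1}(q), phi is smooth near z
  (it agrees on a neighbourhood of z in the deleted product with a map F differentiable
  on an open set of the ambient space) and its differential maps the tangent space
  T_z(S^n x S^n) onto T_q S^n.\<close>
definition transversal_to_point :: "('a::euclidean_space \<times> 'a \<Rightarrow> 'a) \<Rightarrow> 'a \<Rightarrow> bool" where
  "transversal_to_point \<phi> q \<longleftrightarrow>
     (\<forall>z\<in>deleted_sphere. \<phi> z = q \<longrightarrow>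
        (\<exists>U F F'. open U \<and> z \<in> U \<and>
           (\<forall>w\<in>U. (F has_derivative F' w) (at w)) \<and>
           (\<forall>w\<in>U \<inter> deleted_sphere. F w = \<phi> w) \<and>
           F' z ` prod_sphere_tangent z = sphere_tangent q))"

end

theory Submission
  imports Defs
begin

definition ff :: "'a::euclidean_space \<Rightarrow> 'a \<times> 'a \<Rightarrow> 'a" where
  "ff p w = ((snd w - p) \<bullet> (snd w - p)) *\<^sub>R fst w - ((fst w - p) \<bullet> (fst w - p)) *\<^sub>R snd w"

definition phi :: "'a::euclidean_space \<Rightarrow> 'a \<times> 'a \<Rightarrow> 'a" where
  "phi p w = sgn (ff p w)"

lemma unit_inner: "x \<in> unit_sphere \<Longrightarrow> x \<bullet> x = (1::real)"
  by (simp add: dot_square_norm)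

lemma inner_lt1:
  fixes x y :: "'a::euclidean_space"
  assumes "x \<in> unit_sphere" "y \<in> unit_sphere" "x \<noteq> y"
  shows "x \<bullet> y < 1"
proof -
  have "0 < (x - y) \<bullet> (x - y)" using assms by simp
  also have "\<dots> = x \<bullet> x + y \<bullet> y - 2 * (x \<bullet> y)" by (simp add: inner_diff inner_commute)
  finally show ?thesis using unit_inner[OF assms(1)] unit_inner[OF assms(2)] by simp
qed

lemma ff_pos:
  fixes x y p :: "'a::euclidean_space"
  assumes "x \<in> unit_sphere" "y \<in> unit_sphere" "x \<noteq> y"
  shows "ff p (x,y) \<bullet> (x - y) > 0"
proof -
  define a where "a = (y - p) \<bullet> (y - p)"
  define b where "b = (x - p) \<bullet> (x - p)"
  have s: "x \<bullet> y < 1" by (rule inner_lt1[OF assms])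
  have xx: "x \<bullet> x = 1" "y \<bullet> y = 1" using assms unit_inner by auto
  have "a \<ge> 0" "b \<ge> 0" unfolding a_def b_def by auto
  moreover have "a + b > 0"
  proof (rule ccontr)
    assume "\<not> a + b > 0"
    then have "a = 0" "b = 0" using \<open>a \<ge> 0\<close> \<open>b \<ge> 0\<close> by auto
    then have "y = p" "x = p" unfolding a_def b_def by auto
    then show False using assms by simp
  qed
  moreover have "ff p (x,y) \<bullet> (x - y) = (a + b) * (1 - x \<bullet> y)"
  proof -
    have "ff p (x,y) = a *\<^sub>R x - b *\<^sub>R y" by (simp add: ff_def a_def b_def)
    then have "ff p (x,y) \<bullet> (x - y) = a * (x \<bullet> x - x \<bullet> y) - b * (y \<bullet> x - y \<bullet> y)"
      by (simp only: inner_diff_left inner_diff_right inner_scaleR_left) (simp add: algebra_simps)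
    then show ?thesis by (simp add: xx inner_commute algebra_simps)
  qed
  ultimately show ?thesis using s by simp
qed

lemma ff_nz:
  fixes x y p :: "'a::euclidean_space"
  assumes "x \<in> unit_sphere" "y \<in> unit_sphere" "x \<noteq> y"
  shows "ff p (x,y) \<noteq> 0"
  using ff_pos[OF assms, of p] by auto

lemma phi_pos:
  fixes x y p :: "'a::euclidean_space"
  assumes "x \<in> unit_sphere" "y \<in> unit_sphere" "x \<noteq> y"
  shows "phi p (x,y) \<bullet> (x - y) > 0"
  using ff_pos[OF assms, of p] ff_nz[OF assms, of p]
  by (simp add: phi_def sgn_div_norm)

lemma ff_swap: "ff p (y,x) = - ff p (x,y)"
  by (simp add: ff_def)

lemma ff_anti:
  fixes x p :: "'a::euclidean_space"
  assumes "x \<in> unit_sphere" "p \<in> unit_sphere"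
  shows "ff p (x, -x) = 4 *\<^sub>R x"
proof -
  have xx: "x \<bullet> x = 1" "p \<bullet> p = 1" using assms unit_inner by auto
  have "(-x - p) \<bullet> (-x - p) + (x - p) \<bullet> (x - p) = 4"
    by (simp add: inner_diff inner_commute xx algebra_simps)
  then show ?thesis by (simp add: ff_def algebra_simps flip: scaleR_add_left)
qed

lemma ff_xp:
  fixes y p :: "'a::euclidean_space"
  shows "ff p (p,y) = ((y - p) \<bullet> (y - p)) *\<^sub>R p" "ff p (y,p) = - ((y - p) \<bullet> (y - p)) *\<^sub>R p"
  by (simp_all add: ff_def)

lemma phi_xp:
  fixes y p :: "'a::euclidean_space"
  assumes "y \<noteq> p"
  shows "phi p (p,y) = sgn p" "phi p (y,p) = - sgn p"
proof -
  have "(y - p) \<bullet> (y - p) > 0" using assms by simp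
  then show "phi p (p,y) = sgn p" "phi p (y,p) = - sgn p"
    by (simp_all add: phi_def ff_xp sgn_scaleR sgn_minus)
qed

lemma preimage_ff:
  fixes x y p :: "'a::euclidean_space"
  assumes x: "x \<in> unit_sphere" and y: "y \<in> unit_sphere" and "x \<noteq> y" and p: "p \<in> unit_sphere"
    and par: "ff p (x,y) = c *\<^sub>R p"
  shows "x = p \<or> y = p"
proof (rule ccontr)
  assume H: "\<not> (x = p \<or> y = p)"
  define xa where "xa = x \<bullet> p"
  define yb where "yb = y \<bullet> p"
  have xx: "x \<bullet> x = 1" "y \<bullet> y = 1" "p \<bullet> p = 1" using x y p unit_inner by auto
  have xa1: "xa < 1" using inner_lt1[OF x p] H unfolding xa_def by auto
  have yb1: "yb < 1" using inner_lt1[OF y p] H unfolding yb_def by auto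
  define a where "a = 2 - 2 * yb"
  define b where "b = 2 - 2 * xa"
  have ae: "(y - p) \<bullet> (y - p) = a" unfolding a_def yb_def
    by (simp add: inner_diff inner_commute xx)
  have be: "(x - p) \<bullet> (x - p) = b" unfolding b_def xa_def
    by (simp add: inner_diff inner_commute xx)
  define u where "u = x - xa *\<^sub>R p"
  define v where "v = y - yb *\<^sub>R p"
  have f: "a *\<^sub>R x - b *\<^sub>R y = c *\<^sub>R p" using par by (simp add: ff_def ae be)
  have "a *\<^sub>R u - b *\<^sub>R v = (c - a * xa + b * yb) *\<^sub>R p"
    using f unfolding u_def v_def by (simp add: algebra_simps)
  moreover have "(a *\<^sub>R u - b *\<^sub>R v) \<bullet> p = 0"
    unfolding u_def v_def xa_def yb_def by (simp add: inner_diff_left xx inner_commute algebra_simps)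
  ultimately have "(c - a * xa + b * yb) = 0" using xx by simp
  then have uv: "a *\<^sub>R u = b *\<^sub>R v"
    using \<open>a *\<^sub>R u - b *\<^sub>R v = _\<close> by simp
  have uu: "u \<bullet> u = 1 - xa^2" unfolding u_def xa_def
    by (simp add: inner_diff inner_commute xx power2_eq_square algebra_simps)
  have vv: "v \<bullet> v = 1 - yb^2" unfolding v_def yb_def
    by (simp add: inner_diff inner_commute xx power2_eq_square algebra_simps)
  have "(a *\<^sub>R u) \<bullet> (a *\<^sub>R u) = (b *\<^sub>R v) \<bullet> (b *\<^sub>R v)" using uv by simp
  then have "a * a * (1 - xa^2) = b * b * (1 - yb^2)" by (simp add: uu vv algebra_simps)
  then have "4 * ((1 - yb) * (1 - xa)) * (2 * xa - 2 * yb) = 0"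
    unfolding a_def b_def by (simp add: power2_eq_square algebra_simps)
  moreover have "(1 - yb) * (1 - xa) > 0" using xa1 yb1 by simp
  ultimately have "xa = yb" using xa1 yb1 by auto
  then have "a = b" "a > 0" unfolding a_def b_def using yb1 by auto
  then have "u = v" using uv by simp
  then have "x = y" unfolding u_def v_def using \<open>xa = yb\<close> by simp
  then show False using assms by simp
qed

lemma preimage_phi:
  fixes x y p :: "'a::euclidean_space"
  assumes x: "x \<in> unit_sphere" and y: "y \<in> unit_sphere" and "x \<noteq> y" and p: "p \<in> unit_sphere"
  shows "phi p (x,y) \<in> {p, -p} \<longleftrightarrow> x = p \<or> y = p"
proof
  assume "phi p (x,y) \<in> {p, -p}"
  moreover have "ff p (x,y) = norm (ff p (x,y)) *\<^sub>R phi p (x,y)"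
    unfolding phi_def by (simp add: sgn_div_norm ff_nz[OF assms(1-3)])
  ultimately obtain c where "ff p (x,y) = c *\<^sub>R p"
    by (metis insert_iff scaleR_minus_right scaleR_minus_left singletonD)
  then show "x = p \<or> y = p" using preimage_ff[OF assms] by blast
next
  assume "x = p \<or> y = p"
  moreover have "sgn p = p" using p by (simp add: sgn_div_norm)
  ultimately show "phi p (x,y) \<in> {p, -p}" using phi_xp[of y p] phi_xp[of x p] assms by auto
qed

definition ff' :: "'a::euclidean_space \<Rightarrow> 'a \<times> 'a \<Rightarrow> 'a \<times> 'a \<Rightarrow> 'a" where
  "ff' p w d = (2 * ((snd w - p) \<bullet> snd d)) *\<^sub>R fst w + ((snd w - p) \<bullet> (snd w - p)) *\<^sub>R fst d
     - (2 * ((fst w - p) \<bullet> fst d)) *\<^sub>R snd w - ((fst w - p) \<bullet> (fst w - p)) *\<^sub>R snd d"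

lemma ff_deriv: "(ff p has_derivative ff' p w) (at w)"
  unfolding ff_def[abs_def] ff'_def[abs_def]
  apply (rule derivative_eq_intros refl | simp)+
  apply (rule ext)
  apply (simp add: algebra_simps inner_commute)
  done

definition sD :: "'a::real_inner \<Rightarrow> 'a \<Rightarrow> 'a" where
  "sD v h = h /\<^sub>R norm v - ((v \<bullet> h) / norm v ^ 3) *\<^sub>R v"

lemma sgn_deriv:
  fixes v :: "'a::real_inner"
  assumes "v \<noteq> 0"
  shows "(sgn has_derivative sD v) (at v)"
proof -
  have e: "sgn = (\<lambda>v. inverse (norm v) *\<^sub>R v)" by (rule ext) (simp add: sgn_div_norm divide_inverse_commute)
  have n: "norm v > 0" using assms by simp
  show ?thesis unfolding e sD_def
    apply (rule derivative_eq_intros has_derivative_norm[OF assms] refl | simp add: assms)+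
    apply (rule ext)
    using n apply (simp add: sgn_div_norm field_simps power3_eq_cube inner_commute)
    done
qed
lemma phi_deriv:
  assumes "ff p w \<noteq> 0"
  shows "(phi p has_derivative (\<lambda>d. sD (ff p w) (ff' p w d))) (at w)"
  unfolding phi_def[abs_def] using has_derivative_compose[OF ff_deriv sgn_deriv[OF assms]] .

lemma sD_scale:
  fixes p :: "'a::real_inner"
  assumes "a \<noteq> 0" "norm p = 1"
  shows "sD (a *\<^sub>R p) w = (1 / \<bar>a\<bar>) *\<^sub>R (w - (p \<bullet> w) *\<^sub>R p)"
proof -
  have "(a * (p \<bullet> w) / \<bar>a\<bar> ^ 3) * a = (p \<bullet> w) / \<bar>a\<bar>"
    using assms(1) by (cases "a > 0") (auto simp: power3_eq_cube field_simps)
  then show ?thesis using assms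
    by (simp add: sD_def scaleR_diff_right divide_inverse_commute)
qed

lemma D1:
  fixes y p :: "'a::euclidean_space"
  assumes "p \<in> unit_sphere" "y \<noteq> p"
  shows "sD (ff p (p,y)) (ff' p (p,y) (h,k)) = h - (h \<bullet> p) *\<^sub>R p"
proof -
  define a where "a = (y - p) \<bullet> (y - p)"
  have a: "a > 0" using assms unfolding a_def by simp
  have pp: "p \<bullet> p = 1" "norm p = 1" using assms unit_inner by auto
  define c where "c = (y - p) \<bullet> k"
  have "ff p (p,y) = a *\<^sub>R p" by (simp add: ff_def a_def)
  moreover have "ff' p (p,y) (h,k) = (2 * c) *\<^sub>R p + a *\<^sub>R h" by (simp add: ff'_def a_def c_def)
  moreover have "((2 * c) *\<^sub>R p + a *\<^sub>R h) - (p \<bullet> ((2 * c) *\<^sub>R p + a *\<^sub>R h)) *\<^sub>R p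
     = a *\<^sub>R (h - (h \<bullet> p) *\<^sub>R p)"
    by (simp add: inner_add_right pp algebra_simps inner_commute)
  ultimately show ?thesis using a pp by (simp add: sD_scale)
qed

lemma D2:
  fixes y p :: "'a::euclidean_space"
  assumes "p \<in> unit_sphere" "y \<noteq> p"
  shows "sD (ff p (y,p)) (ff' p (y,p) (h,k)) = - (k - (k \<bullet> p) *\<^sub>R p)"
proof -
  define a where "a = (y - p) \<bullet> (y - p)"
  have a: "a > 0" using assms unfolding a_def by simp
  have pp: "p \<bullet> p = 1" "norm p = 1" using assms unit_inner by auto
  define c where "c = (y - p) \<bullet> h"
  have "ff p (y,p) = (- a) *\<^sub>R p" by (simp add: ff_def a_def)
  moreover have "ff' p (y,p) (h,k) = - ((2 * c) *\<^sub>R p + a *\<^sub>R k)" by (simp add: ff'_def a_def c_def)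
  moreover have "(- ((2 * c) *\<^sub>R p + a *\<^sub>R k)) - (p \<bullet> (- ((2 * c) *\<^sub>R p + a *\<^sub>R k))) *\<^sub>R p
     = - (a *\<^sub>R (k - (k \<bullet> p) *\<^sub>R p))"
    by (simp add: inner_add_right pp algebra_simps inner_commute)
  moreover have "sD ((- a) *\<^sub>R p) (- ((2 * c) *\<^sub>R p + a *\<^sub>R k)) = (1 / \<bar>-a\<bar>) *\<^sub>R
     ((- ((2 * c) *\<^sub>R p + a *\<^sub>R k)) - (p \<bullet> (- ((2 * c) *\<^sub>R p + a *\<^sub>R k))) *\<^sub>R p)"
    using a pp by (intro sD_scale) auto
  ultimately show ?thesis using a by simp
qed

lemma img1:
  fixes p :: "'a::euclidean_space"
  assumes "p \<in> unit_sphere" and Sne: "S \<noteq> {}"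
  shows "(\<lambda>d. fst d - (fst d \<bullet> p) *\<^sub>R p) ` (sphere_tangent p \<times> S) = sphere_tangent p"
proof -
  have pp: "p \<bullet> p = 1" using assms unit_inner by auto
  obtain s where s: "s \<in> S" using Sne by auto
  show ?thesis
  proof
    show "(\<lambda>d. fst d - (fst d \<bullet> p) *\<^sub>R p) ` (sphere_tangent p \<times> S) \<subseteq> sphere_tangent p"
      by (auto simp: sphere_tangent_def)
    show "sphere_tangent p \<subseteq> (\<lambda>d. fst d - (fst d \<bullet> p) *\<^sub>R p) ` (sphere_tangent p \<times> S)"
    proof
      fix v assume v: "v \<in> sphere_tangent p"
      then have "v = (\<lambda>d. fst d - (fst d \<bullet> p) *\<^sub>R p) (v, s)" by (simp add: sphere_tangent_def)
      then show "v \<in> (\<lambda>d. fst d - (fst d \<bullet> p) *\<^sub>R p) ` (sphere_tangent p \<times> S)"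
        using v s by blast
    qed
  qed
qed

lemma img2:
  fixes p :: "'a::euclidean_space"
  assumes "p \<in> unit_sphere" and Sne: "S \<noteq> {}"
  shows "(\<lambda>d. - (snd d - (snd d \<bullet> p) *\<^sub>R p)) ` (S \<times> sphere_tangent p) = sphere_tangent p"
proof -
  obtain s where s: "s \<in> S" using Sne by auto
  show ?thesis
  proof
    show "(\<lambda>d. - (snd d - (snd d \<bullet> p) *\<^sub>R p)) ` (S \<times> sphere_tangent p) \<subseteq> sphere_tangent p"
      by (auto simp: sphere_tangent_def)
    show "sphere_tangent p \<subseteq> (\<lambda>d. - (snd d - (snd d \<bullet> p) *\<^sub>R p)) ` (S \<times> sphere_tangent p)"
    proof
      fix v assume v: "v \<in> sphere_tangent p"
      then have "v = (\<lambda>d. - (snd d - (snd d \<bullet> p) *\<^sub>R p)) (s, -v)" by (simp add: sphere_tangent_def)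
      moreover have "-v \<in> sphere_tangent p" using v by (simp add: sphere_tangent_def)
      ultimately show "v \<in> (\<lambda>d. - (snd d - (snd d \<bullet> p) *\<^sub>R p)) ` (S \<times> sphere_tangent p)"
        using s by blast
    qed
  qed
qed
lemma ds_iff: "(x,y) \<in> deleted_sphere \<longleftrightarrow> x \<in> unit_sphere \<and> y \<in> unit_sphere \<and> x \<noteq> y"
  by (auto simp: deleted_sphere_def)

lemma ff_cont: "continuous_on A (ff p)"
  unfolding ff_def[abs_def] by (intro continuous_intros)

lemma phi_cont: "continuous_on deleted_sphere (phi p)"
  unfolding phi_def[abs_def]
  by (rule continuous_on_sgn[OF ff_cont]) (auto simp: ds_iff ff_nz)

lemma phi_sphere: "w \<in> deleted_sphere \<Longrightarrow> phi p w \<in> unit_sphere"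
  by (cases w) (auto simp: ds_iff phi_def norm_sgn ff_nz)

lemma transv:
  fixes p :: "'a::euclidean_space"
  assumes p: "p \<in> unit_sphere" and q: "q = p \<or> q = -p"
  shows "transversal_to_point (phi p) q"
  unfolding transversal_to_point_def
proof (intro ballI impI)
  fix z assume z: "z \<in> deleted_sphere" and pz: "phi p z = q"
  obtain x y where zxy: "z = (x,y)" by (cases z)
  have xy: "x \<in> unit_sphere" "y \<in> unit_sphere" "x \<noteq> y" using z zxy ds_iff by auto
  have "x = p \<or> y = p" using preimage_phi[OF xy p] pz q zxy by auto
  have stq: "sphere_tangent q = sphere_tangent p" using q by (auto simp: sphere_tangent_def)
  have ne: "sphere_tangent v \<noteq> {}" for v :: 'a by (auto simp: sphere_tangent_def intro!: exI[of _ 0])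
  show "\<exists>U F F'. open U \<and> z \<in> U \<and>
           (\<forall>w\<in>U. (F has_derivative F' w) (at w)) \<and>
           (\<forall>w\<in>U \<inter> deleted_sphere. F w = phi p w) \<and>
           F' z ` prod_sphere_tangent z = sphere_tangent q"
  proof (intro exI conjI)
    show "open {w. ff p w \<noteq> 0}"
      by (rule open_Collect_neq) (auto intro: ff_cont)
    show "z \<in> {w. ff p w \<noteq> 0}" using ff_nz[OF xy] zxy by auto
    show "\<forall>w\<in>{w. ff p w \<noteq> 0}. (phi p has_derivative (\<lambda>d. sD (ff p w) (ff' p w d))) (at w)"
      using phi_deriv by blast
    show "\<forall>w\<in>{w. ff p w \<noteq> 0} \<inter> deleted_sphere. phi p w = phi p w" by simp
    show "(\<lambda>d. sD (ff p z) (ff' p z d)) ` prod_sphere_tangent z = sphere_tangent q"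
    proof (cases "x = p")
      case True
      then have "y \<noteq> p" using xy by auto
      then have "(\<lambda>d. sD (ff p z) (ff' p z d)) = (\<lambda>d. fst d - (fst d \<bullet> p) *\<^sub>R p)"
        using D1[OF p] True zxy by (auto intro!: ext)
      moreover have "prod_sphere_tangent z = sphere_tangent p \<times> sphere_tangent y"
        using True zxy by (simp add: prod_sphere_tangent_def)
      ultimately show ?thesis using img1[OF p ne, of y] stq by metis
    next
      case False
      then have "y = p" using \<open>x = p \<or> y = p\<close> by auto
      then have "(\<lambda>d. sD (ff p z) (ff' p z d)) = (\<lambda>d. - (snd d - (snd d \<bullet> p) *\<^sub>R p))"
        using D2[OF p] False zxy by (auto intro!: ext)
      moreover have "prod_sphere_tangent z = sphere_tangent x \<times> sphere_tangent p"
        using \<open>y = p\<close> zxy by (simp add: prod_sphere_tangent_def)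
      ultimately show ?thesis using img2[OF p ne, of x] stq by metis
    qed
  qed
qed

lemma preimage_set:
  fixes p :: "'a::euclidean_space"
  assumes p: "p \<in> unit_sphere"
  shows "{z \<in> deleted_sphere. phi p z \<in> {p, - p}} = T_set p \<union> tau ` T_set p"
proof -
  have "z \<in> deleted_sphere \<and> phi p z \<in> {p, - p} \<longleftrightarrow> z \<in> T_set p \<union> tau ` T_set p" for z
  proof -
    obtain x y where zxy: "z = (x,y)" by (cases z)
    have "tau ` T_set p = (unit_sphere - {p}) \<times> {p}"
      by (auto simp: T_set_def tau_def image_iff)
    then show ?thesis
      using preimage_phi[of x y p] p zxy by (auto simp: ds_iff T_set_def)
  qed
  then show ?thesis by blast
qed

lemma hom_ineq:
  fixes x y p :: "'a::euclidean_space"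
  assumes xy: "x \<in> unit_sphere" "y \<in> unit_sphere" "x \<noteq> y" and t: "0 \<le> t" "t \<le> 1"
  shows "(t *\<^sub>R x + (1 - t) *\<^sub>R phi p (x,y)) \<bullet> (x - y) > 0"
    "(t *\<^sub>R y - (1 - t) *\<^sub>R phi p (x,y)) \<bullet> (x - y) < 0"
proof -
  have s: "x \<bullet> y < 1" by (rule inner_lt1[OF xy])
  have xx: "x \<bullet> x = 1" "y \<bullet> y = 1" using xy unit_inner by auto
  have a: "x \<bullet> (x - y) = 1 - x \<bullet> y" "y \<bullet> (x - y) = x \<bullet> y - 1"
    by (simp_all add: inner_diff_right xx inner_commute)
  have b: "phi p (x,y) \<bullet> (x - y) > 0" by (rule phi_pos[OF xy])
  have "t * (1 - x \<bullet> y) + (1 - t) * (phi p (x,y) \<bullet> (x - y)) > 0"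
  proof (cases "t = 0")
    case True then show ?thesis using b by simp
  next
    case False then have "t > 0" using t by simp
    then show ?thesis using s b t by (intro add_pos_nonneg) auto
  qed
  then show "(t *\<^sub>R x + (1 - t) *\<^sub>R phi p (x,y)) \<bullet> (x - y) > 0"
    by (simp add: inner_add_left a)
  have "t * (x \<bullet> y - 1) - (1 - t) * (phi p (x,y) \<bullet> (x - y)) < 0"
  proof (cases "t = 0")
    case True then show ?thesis using b by simp
  next
    case False then have "t > 0" using t by simp
    then have "t * (x \<bullet> y - 1) < 0" using s by (simp add: mult_pos_neg)
    moreover have "(1 - t) * (phi p (x,y) \<bullet> (x - y)) \<ge> 0" using b t by simp
    ultimately show ?thesis by simp
  qed
  then show "(t *\<^sub>R y - (1 - t) *\<^sub>R phi p (x,y)) \<bullet> (x - y) < 0"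
    by (simp add: inner_diff_left a)
qed

lemma sgn_pos: "(u::'a::real_inner) \<bullet> d > 0 \<Longrightarrow> sgn u \<bullet> d > 0"
  by (cases "u = 0") (auto simp: sgn_div_norm)
lemma sgn_neg: "(u::'a::real_inner) \<bullet> d < 0 \<Longrightarrow> sgn u \<bullet> d < 0"
  by (cases "u = 0") (auto simp: sgn_div_norm intro!: mult_pos_neg)

lemma neg_self: "(x::'a::real_vector) = - x \<Longrightarrow> x = 0"
proof -
  assume "x = - x"
  then have "x + x = 0" by (metis add.right_inverse)
  then have "(2::real) *\<^sub>R x = 0" by (simp add: scaleR_2)
  then show "x = 0" by simp
qed

lemma homeq:
  fixes p :: "'a::euclidean_space"
  assumes p: "p \<in> unit_sphere"
  shows "homotopy_equivalence_map deleted_sphere unit_sphere (phi p)"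
  unfolding homotopy_equivalence_map_def
proof (intro conjI exI)
  show "continuous_map (top_of_set deleted_sphere) (top_of_set unit_sphere) (phi p)"
    using phi_cont phi_sphere by auto
  define g where "g = (\<lambda>x::'a. (x, -x))"
  show "continuous_map (top_of_set unit_sphere) (top_of_set deleted_sphere) g"
  proof -
    have "continuous_on unit_sphere g" unfolding g_def by (intro continuous_intros)
    moreover have "g \<in> unit_sphere \<rightarrow> deleted_sphere"
      unfolding g_def by (auto simp: ds_iff) (metis norm_zero zero_neq_one neg_self)
    ultimately show ?thesis by simp
  qed
  show "homotopic_with_canon (\<lambda>_. True) unit_sphere unit_sphere (phi p \<circ> g) id"
  proof (rule homotopic_with_equal)
    show "continuous_map (top_of_set unit_sphere) (top_of_set unit_sphere) (phi p \<circ> g)"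
    proof -
      have "continuous_on unit_sphere g" unfolding g_def by (intro continuous_intros)
      moreover have "g ` unit_sphere \<subseteq> deleted_sphere"
        unfolding g_def by (auto simp: ds_iff) (metis norm_zero zero_neq_one neg_self)
      ultimately have "continuous_on unit_sphere (phi p \<circ> g)"
        using phi_cont continuous_on_compose continuous_on_subset by blast
      moreover have "(phi p \<circ> g) \<in> unit_sphere \<rightarrow> unit_sphere"
      proof
        fix x :: 'a assume "x \<in> unit_sphere"
        then have "g x \<in> deleted_sphere" using \<open>g ` unit_sphere \<subseteq> deleted_sphere\<close> by blast
        then show "(phi p \<circ> g) x \<in> unit_sphere" unfolding o_def by (rule phi_sphere)
      qed
      ultimately show ?thesis by simp
    qed
    fix x assume "x \<in> topspace (top_of_set (unit_sphere :: 'a set))"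
    then have x: "x \<in> unit_sphere" by simp
    show "(phi p \<circ> g) x = id x"
      using x ff_anti[OF x p] by (simp add: g_def phi_def sgn_scaleR sgn_div_norm)
  qed simp_all
  define H where "H = (\<lambda>(t::real, w). (sgn (t *\<^sub>R fst w + (1 - t) *\<^sub>R phi p w),
                                        sgn (t *\<^sub>R snd w - (1 - t) *\<^sub>R phi p w)))"
  have Hin: "H (t, w) \<in> deleted_sphere \<and> fst w - snd w \<noteq> 0 \<and> (t *\<^sub>R fst w + (1 - t) *\<^sub>R phi p w) \<noteq> 0
     \<and> (t *\<^sub>R snd w - (1 - t) *\<^sub>R phi p w) \<noteq> 0"
    if "t \<in> {0..1}" "w \<in> deleted_sphere" for t :: real and w :: "'a \<times> 'a"
  proof -
    obtain x y where w: "w = (x,y)" by (cases w)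
    have xy: "x \<in> unit_sphere" "y \<in> unit_sphere" "x \<noteq> y" using that w ds_iff by auto
    note I = hom_ineq[OF xy, of t p]
    have "sgn (t *\<^sub>R x + (1 - t) *\<^sub>R phi p (x,y)) \<bullet> (x - y) > 0" using I that by (intro sgn_pos) auto
    moreover have "sgn (t *\<^sub>R y - (1 - t) *\<^sub>R phi p (x,y)) \<bullet> (x - y) < 0" using I that by (intro sgn_neg) auto
    moreover have "t *\<^sub>R x + (1 - t) *\<^sub>R phi p (x,y) \<noteq> 0" "t *\<^sub>R y - (1 - t) *\<^sub>R phi p (x,y) \<noteq> 0"
      using I that by auto
    ultimately show ?thesis using xy unfolding H_def w
      by (auto simp: ds_iff norm_sgn)
  qed
  show "homotopic_with_canon (\<lambda>_. True) deleted_sphere deleted_sphere (g \<circ> phi p) id"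
  proof (subst homotopic_with, simp, intro exI conjI ballI)
    have "continuous_on ({0..1} \<times> deleted_sphere) (\<lambda>z. phi p (snd z))"
      by (rule continuous_on_compose2[OF phi_cont]) (auto intro: continuous_intros)
    then have "continuous_on ({0..1} \<times> deleted_sphere) H"
      unfolding H_def case_prod_unfold
      using Hin by (intro continuous_intros) auto
    moreover have "H \<in> {0..1} \<times> deleted_sphere \<rightarrow> deleted_sphere" using Hin by auto
    ultimately show "continuous_map (prod_topology (top_of_set {0..1}) (top_of_set deleted_sphere))
       (top_of_set deleted_sphere) H" by simp
  next
    fix w :: "'a \<times> 'a" assume "w \<in> topspace (top_of_set deleted_sphere)"
    then have w: "w \<in> deleted_sphere" by simp
    then have n: "norm (phi p w) = 1" using phi_sphere[OF w, of p] by simp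
    show "H (0, w) = (g \<circ> phi p) w" using n by (simp add: H_def g_def sgn_div_norm)
    obtain x y where wxy: "w = (x,y)" by (cases w)
    then have "norm x = 1" "norm y = 1" using w ds_iff by auto
    then show "H (1, w) = id w" using wxy by (simp add: H_def sgn_div_norm)
  qed simp
qed

theorem lemma8:
  fixes p :: "'a::euclidean_space"
  assumes "p \<in> unit_sphere"
  shows "\<exists>(\<phi> :: 'a \<times> 'a \<Rightarrow> 'a) q.
           homotopy_equivalence_map deleted_sphere unit_sphere \<phi> \<and>
           (\<forall>z\<in>deleted_sphere. \<phi> (tau z) = - \<phi> z) \<and>
           q \<in> unit_sphere \<and>
           transversal_to_point \<phi> q \<and> transversal_to_point \<phi> (- q) \<and>
           {z \<in> deleted_sphere. \<phi> z \<in> {q, - q}} = T_set p \<union> tau ` T_set p"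
proof (intro exI conjI)
  show "homotopy_equivalence_map deleted_sphere unit_sphere (phi p)" by (rule homeq[OF assms])
  show "\<forall>z\<in>deleted_sphere. phi p (tau z) = - phi p z"
    by (auto simp: tau_def phi_def ff_swap[of p "snd _" "fst _", simplified] sgn_minus)
  show "p \<in> unit_sphere" by fact
  show "transversal_to_point (phi p) p" using transv[OF assms] by simp
  show "transversal_to_point (phi p) (- p)" using transv[OF assms] by simp
  show "{z \<in> deleted_sphere. phi p z \<in> {p, - p}} = T_set p \<union> tau ` T_set p"
    by (rule preimage_set[OF assms])
qed

end
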